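(* There is a constant $C>0$ such that for all sufficiently large $n$ the following holds. Let $u(z) = z-\zeta$ for some $\zeta \in \mathbb{C}$ with $|\zeta|=1$. Then for any $\delta \in [0,1)$, $$\prod_{j=J_1}^{J_2-1} \left|u\left(h\left(e^{2\pi i \frac{j+\delta}{m}}\right)\right)\right| \le \exp(Cn^{1/5}\log^5n).$$
   Context: Let $n$ be a positive integer, $a = n^{-2/5}$, $r = a^{-1/2}$ (floor functions omitted throughout, so $r$, $m$, $J_1$, $J_2$ below are integers). Let $r_* \in \{1,\dots,r\}$ be such that $\sum_{j=1}^{r_*} \frac{1}{\log^2(j+3)}-\sum_{j=r_*+1}^r \frac{1}{\log^2(j+3)} \in [20,21]$. Let $\epsilon_j = +1$ for $1 \le j \le r_*$ and $\epsilon_j = -1$ for $r_*< j \le r$. Let $\lambda_a>0$ satisfy $\sum_{j=1}^r \frac{\lambda_a}{j^2\log^2(j+3)} = 1$, $d_j = \frac{\lambda_a}{j^2\log^2(j+3)}$, $\widetilde{h}(z) = \widetilde{\lambda}_a\sum_{j=1}^r \epsilon_j d_j z^j$ with $\widetilde{\lambda}_a>0$ chosen so that $\widetilde{h}(1)=1$, and $h(z) = (1-a^{10})\widetilde{h}(z)$. Let $\alpha=e^{ia}$, $\beta=e^{-ia}$, $G_a = \{z \in \mathbb{C} : \arg(\frac{\alpha-z}{z-\beta}) \in (\frac{a}{2},a)\}$. Fix absolute constants $c_4,c_5,C_6>0$ such that, for all sufficiently small $a>0$, $h(e^{2\pi i t}) \in G_a$ whenever $|t|\le c_4 a$, and $|h(e^{2\pi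 i t})| \le 1-c_5\frac{|t|}{\log^2(a^{-1})}$ whenever $t \in [-\frac12,\frac12]\setminus[-C_6a^{1/2},C_6a^{1/2}]$. Set $m = c_4^{-1}n^{2/5}$, $J_1 = c_5^{-1}n^{-1/5}m\log^4 n$, and $J_2 = m-J_1$. $\log$ is the natural logarithm. *)

theory Defs
  imports "HOL-Analysis.Analysis"
begin

definition rr :: "real \<Rightarrow> nat" where
  "rr a = nat \<lfloor>a powr (-1/2)\<rfloor>"

definition rstar_ok :: "real \<Rightarrow> nat \<Rightarrow> bool" where
  "rstar_ok a s \<longleftrightarrow> s \<in> {1..rr a} \<and>
     (\<Sum>j=1..s. 1 / (ln (real j + 3))^2) - (\<Sum>j=s+1..rr a. 1 / (ln (real j + 3))^2) \<in> {20..21}"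

definition lam :: "real \<Rightarrow> real" where
  "lam a = 1 / (\<Sum>j=1..rr a. 1 / ((real j)^2 * (ln (real j + 3))^2))"

definition dd :: "real \<Rightarrow> nat \<Rightarrow> real" where
  "dd a j = lam a / ((real j)^2 * (ln (real j + 3))^2)"

definition eps :: "nat \<Rightarrow> nat \<Rightarrow> real" where
  "eps s j = (if j \<le> s then 1 else -1)"

text \<open>tilde-lambda chosen so that htil(1) = 1\<close>
definition ltil :: "(real \<Rightarrow> nat) \<Rightarrow> real \<Rightarrow> real" where
  "ltil rs a = 1 / (\<Sum>j=1..rr a. eps (rs a) j * dd a j)"

definition htil :: "(real \<Rightarrow> nat) \<Rightarrow> real \<Rightarrow> complex \<Rightarrow> complex" where
  "htil rs a z = of_real (ltil rs a) * (\<Sum>j=1..rr a. of_real (eps (rs a) j * dd a j) * z ^ j)"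

definition hh :: "(real \<Rightarrow> nat) \<Rightarrow> real \<Rightarrow> complex \<Rightarrow> complex" where
  "hh rs a z = of_real (1 - a ^ 10) * htil rs a z"

definition Ga :: "real \<Rightarrow> complex set" where
  "Ga a = {z. Arg ((exp (\<i> * of_real a) - z) / (z - exp (- \<i> * of_real a))) \<in> {a/2<..<a}}"

definition aa :: "nat \<Rightarrow> real" where
  "aa n = real n powr (-2/5)"

definition mm :: "real \<Rightarrow> nat \<Rightarrow> int" where
  "mm c4 n = \<lfloor>real n powr (2/5) / c4\<rfloor>"

definition JJ1 :: "real \<Rightarrow> real \<Rightarrow> nat \<Rightarrow> int" where
  "JJ1 c4 c5 n = \<lfloor>real n powr (-1/5) * of_int (mm c4 n) * (ln (real n))^4 / c5\<rfloor>"

definition JJ2 :: "real \<Rightarrow> real \<Rightarrow> nat \<Rightarrow> int" where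
  "JJ2 c4 c5 n = mm c4 n - JJ1 c4 c5 n"

end

theory Submission
  imports Defs "HOL-Computational_Algebra.Polynomial" "HOL-Real_Asymp.Real_Asymp"
begin


lemma ln_norm_bound:
  fixes x :: complex and rho :: real
  assumes "norm x \<le> rho" "rho < 1"
  shows "ln (norm (1 - x)) \<le> - Re (\<Sum>k=1..K. x^k / of_nat k) + rho^(K+1)/(1-rho)"
proof -
  define f where "f = (\<lambda>n::nat. - (x^n) / of_nat n)"
  have x1: "norm x < 1" using assms by linarith
  have s: "f sums Ln (1 - x)" using Ln_series'[of "-x"] x1 by (simp add: f_def)
  have su: "summable f" using s sums_summable by blast
  have split: "Ln (1-x) = (\<Sum>n. f (n + (K+1))) + (\<Sum>i<K+1. f i)"
    using suminf_split_initial_segment[OF su, of "K+1"] s sums_unique by metis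
  have "{..<K+1} = insert 0 {1..K}" by auto
  hence "(\<Sum>i<K+1. f i) = f 0 + (\<Sum>i=1..K. f i)" by simp
  also have "\<dots> = - (\<Sum>k=1..K. x^k / of_nat k)" by (simp add: f_def sum_negf)
  finally have init: "(\<Sum>i<K+1. f i) = - (\<Sum>k=1..K. x^k / of_nat k)" .
  have r0: "0 \<le> rho" using assms(1) norm_ge_zero order_trans by blast
  have g0: "summable (\<lambda>n. rho^n * rho^(K+1))"
    by (rule summable_mult2, rule summable_geometric) (use r0 assms(2) in simp)
  have g: "summable (\<lambda>n. rho^(n + (K+1)))"
    using g0 by (simp only: power_add)
  have gs: "(\<Sum>n. rho^(n + (K+1))) = rho^(K+1) / (1 - rho)"
  proof -
    have "(\<Sum>n. rho^(n + (K+1))) = (\<Sum>n. rho^n * rho^(K+1))" by (simp only: power_add)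
    also have "\<dots> = (\<Sum>n. rho^n) * rho^(K+1)"
      using suminf_mult2[of "\<lambda>n. rho^n" "rho^(K+1)"] summable_geometric[of rho] r0 assms(2) by simp
    also have "\<dots> = rho^(K+1) / (1 - rho)"
      using suminf_geometric[of rho] r0 assms(2) by simp
    finally show ?thesis .
  qed
  have tb: "norm (\<Sum>n. f (n + (K+1))) \<le> (\<Sum>n. rho^(n + (K+1)))"
  proof (rule norm_suminf_le[OF _ g])
    fix n
    have "norm (f (n + (K+1))) = norm x ^ (n+(K+1)) / real (n + (K+1))"
      unfolding f_def norm_divide norm_minus_cancel norm_power norm_of_nat ..
    also have "\<dots> \<le> norm x ^ (n+(K+1)) / 1"
      by (rule divide_left_mono) auto
    also have "\<dots> = norm x ^ (n+(K+1))" by simp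
    also have "\<dots> \<le> rho ^ (n+(K+1))" by (rule power_mono[OF assms(1)]) simp
    finally show "norm (f (n + (K+1))) \<le> rho ^ (n+(K+1))" .
  qed
  have ne: "1 - x \<noteq> 0" using x1 by auto
  have "ln (norm (1 - x)) = Re (Ln (1 - x))" using ne by simp
  also have "\<dots> = Re (\<Sum>n. f (n + (K+1))) - Re (\<Sum>k=1..K. x^k / of_nat k)"
    using split init by simp
  also have "\<dots> \<le> norm (\<Sum>n. f (n + (K+1))) - Re (\<Sum>k=1..K. x^k / of_nat k)"
    using complex_Re_le_cmod by simp
  finally show ?thesis using tb gs by simp
qed

lemma roots_sum_zero:
  fixes m :: int and i :: nat and delta :: real
  assumes "0 < i" "int i < m"
  shows "(\<Sum>j\<in>{0..<m}. cis (2 * pi * (of_int j + delta) / of_int m) ^ i) = 0"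
proof -
  define M where "M = nat m"
  have mM: "m = int M" using assms M_def by simp
  have M0: "M > 0" "i < M" using assms mM by auto
  have "{0..<m} = int ` {..<M}" using mM by (auto simp: image_iff intro!: bexI[of _ "nat _"])
  hence "(\<Sum>j\<in>{0..<m}. cis (2 * pi * (of_int j + delta) / of_int m) ^ i)
       = (\<Sum>j<M. cis (2 * pi * (real j + delta) / real M) ^ i)"
    by (simp add: sum.reindex mM)
  also have "\<dots> = (\<Sum>j<M. cis (2 * pi * real i * delta / real M) * cis (2 * pi * real i / real M) ^ j)"
  proof (rule sum.cong[OF refl])
    fix j assume "j \<in> {..<M}"
    have "cis (2 * pi * (real j + delta) / real M) ^ i = cis (real i * (2 * pi * (real j + delta) / real M))"
      by (simp only: Complex.DeMoivre)
    also have "\<dots> = cis (2 * pi * real i * delta / real M + real j * (2 * pi * real i / real M))"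
      by (rule arg_cong[where f=cis]) (simp add: algebra_simps add_divide_distrib)
    also have "\<dots> = cis (2 * pi * real i * delta / real M) * cis (2 * pi * real i / real M) ^ j"
      by (simp add: cis_mult[symmetric] Complex.DeMoivre)
    finally show "cis (2 * pi * (real j + delta) / real M) ^ i = cis (2 * pi * real i * delta / real M) * cis (2 * pi * real i / real M) ^ j" .
  qed
  also have "\<dots> = cis (2 * pi * real i * delta / real M) * (\<Sum>j<M. cis (2 * pi * real i / real M) ^ j)"
    by (simp add: sum_distrib_left)
  also have "(\<Sum>j<M. cis (2 * pi * real i / real M) ^ j) = 0"
  proof -
    define x where "x = cis (2 * pi * real i / real M)"
    have xM: "x ^ M = 1"
    proof -
      have "x ^ M = cis (real M * (2 * pi * real i / real M))" by (simp add: x_def Complex.DeMoivre)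
      also have "real M * (2 * pi * real i / real M) = 2 * pi * real i" using M0 by simp
      finally show ?thesis by simp
    qed
    have x1: "x \<noteq> 1"
    proof
      assume "x = 1"
      hence "Re (cis (2 * pi * real i / real M)) = 1" unfolding x_def by simp
      hence "cos (2 * pi * real i / real M) = 1" by simp
      then obtain k :: int where k: "2 * pi * real i / real M = of_int k * 2 * pi"
        using cos_one_2pi_int by blast
      hence "real i = of_int k * real M" using M0 by (simp add: field_simps)
      hence "int i = k * int M" by (metis of_int_eq_iff of_int_mult of_int_of_nat_eq)
      hence ik: "int i = k * int M" .
      show False
      proof (cases "k \<le> 0")
        case True
        hence "k * int M \<le> 0" by (simp add: mult_nonpos_nonneg)
        thus False using ik M0 assms(1) by simp
      next
        case False
        hence "1 * int M \<le> k * int M" by (intro mult_right_mono) auto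
        thus False using ik M0 assms(1) by linarith
      qed
    qed
    show ?thesis using geometric_sum[OF x1, of M] xM by (simp add: x_def[symmetric])
  qed
  finally show ?thesis by simp
qed

lemma poly_roots_sum_zero:
  fixes Q :: "complex poly" and m :: int and delta :: real
  assumes "coeff Q 0 = 0" "int (degree Q) < m"
  shows "(\<Sum>j\<in>{0..<m}. poly Q (cis (2 * pi * (of_int j + delta) / of_int m))) = 0"
proof -
  have "(\<Sum>j\<in>{0..<m}. poly Q (cis (2 * pi * (of_int j + delta) / of_int m)))
      = (\<Sum>j\<in>{0..<m}. \<Sum>i\<le>degree Q. coeff Q i * cis (2 * pi * (of_int j + delta) / of_int m) ^ i)"
    by (simp add: poly_altdef)
  also have "\<dots> = (\<Sum>i\<le>degree Q. coeff Q i * (\<Sum>j\<in>{0..<m}. cis (2 * pi * (of_int j + delta) / of_int m) ^ i))"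
    by (subst sum.swap) (simp add: sum_distrib_left)
  also have "\<dots> = 0"
  proof (rule sum.neutral, intro ballI)
    fix i assume i: "i \<in> {..degree Q}"
    show "coeff Q i * (\<Sum>j\<in>{0..<m}. cis (2 * pi * (of_int j + delta) / of_int m) ^ i) = 0"
    proof (cases "i = 0")
      case True thus ?thesis using assms(1) by simp
    next
      case False
      have "int i < m" using i assms(2) by simp
      thus ?thesis using roots_sum_zero[of i m delta] False by simp
    qed
  qed
  finally show ?thesis .
qed

lemma power_sum_zero:
  fixes c :: "nat \<Rightarrow> complex" and m :: int and delta :: real and k r :: nat
  assumes "1 \<le> k" "int (k * r) < m"
  shows "(\<Sum>j\<in>{0..<m}. (\<Sum>i\<in>{1..r}. c i * cis (2 * pi * (of_int j + delta) / of_int m) ^ i) ^ k) = 0"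
proof -
  define Q where "Q = (\<Sum>i\<in>{1..r}. monom (c i) i)"
  have pQ: "poly Q z = (\<Sum>i\<in>{1..r}. c i * z ^ i)" for z
    by (simp add: Q_def poly_sum poly_monom)
  have cQ: "coeff Q 0 = 0" by (simp add: Q_def coeff_sum coeff_monom)
  have dQ: "degree Q \<le> r" unfolding Q_def
    by (rule degree_sum_le) (auto intro: order_trans[OF degree_monom_le])
  have c0: "coeff (Q ^ k) 0 = 0" using assms(1) cQ by (simp add: coeff_0_power)
  have "degree (Q ^ k) \<le> degree Q * k" by (rule degree_power_le)
  also have "\<dots> \<le> r * k" using dQ by simp
  finally have "degree (Q ^ k) \<le> k * r" by (simp add: mult.commute)
  hence "int (degree (Q ^ k)) \<le> int (k * r)" by (simp only: of_nat_le_iff)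
  hence "int (degree (Q ^ k)) < m" using assms(2) by linarith
  hence "(\<Sum>j\<in>{0..<m}. poly (Q ^ k) (cis (2 * pi * (of_int j + delta) / of_int m))) = 0"
    using poly_roots_sum_zero[OF c0] by blast
  thus ?thesis by (simp add: poly_power pQ)
qed


lemma core:
  fixes c :: "nat \<Rightarrow> complex" and r K :: nat and m :: int and R :: "int set"
    and zeta :: complex and delta rho B :: real
  assumes "0 < m" "R \<subseteq> {0..<m}" "int (K * r) < m" "norm zeta = 1" "rho < 1" "1 \<le> B"
    and hR: "\<forall>j\<in>R. norm (\<Sum>i\<in>{1..r}. c i * cis (2 * pi * (of_int j + delta) / of_int m) ^ i) \<le> rho"
    and hB: "\<forall>j\<in>{0..<m}. norm (\<Sum>i\<in>{1..r}. c i * cis (2 * pi * (of_int j + delta) / of_int m) ^ i) \<le> B"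
  shows "(\<Prod>j\<in>R. norm ((\<Sum>i\<in>{1..r}. c i * cis (2 * pi * (of_int j + delta) / of_int m) ^ i) - zeta))
     \<le> exp (real (card ({0..<m} - R)) * B^K * (\<Sum>k=1..K. 1 / real k) + real (card R) * (rho^(K+1)/(1-rho)))"
proof -
  define w where "w = (\<lambda>j::int. cis (2 * pi * (of_int j + delta) / of_int m))"
  define hp where "hp = (\<lambda>z. \<Sum>i\<in>{1..r}. c i * z ^ i)"
  define x where "x = (\<lambda>j. cnj zeta * hp (w j))"
  define E where "E = {0..<m} - R"
  have finR: "finite R" using assms(2) finite_subset by blast
  have finE: "finite E" unfolding E_def by (rule finite_Diff) simp
  have zz: "zeta * cnj zeta = 1" using assms(4) complex_norm_square[of zeta] by simp
  have zz2: "cnj zeta * zeta = 1" using zz by (simp add: mult.commute)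
  have nx: "norm (x j) = norm (hp (w j))" for j
    by (simp add: x_def norm_mult assms(4))
  have eqn: "norm (hp (w j) - zeta) = norm (1 - x j)" for j
  proof -
    have "- zeta * (1 - x j) = zeta * x j - zeta" by (simp add: algebra_simps)
    also have "zeta * x j = (zeta * cnj zeta) * hp (w j)" by (simp add: x_def mult.assoc)
    finally have "hp (w j) - zeta = - zeta * (1 - x j)" using zz by simp
    thus ?thesis by (simp add: norm_mult assms(4))
  qed
  have hR': "\<forall>j\<in>R. norm (hp (w j)) \<le> rho" using hR unfolding hp_def w_def .
  have hB': "\<forall>j\<in>E. norm (hp (w j)) \<le> B" using hB unfolding hp_def w_def E_def by blast
  have xR: "norm (x j) \<le> rho" if "j \<in> R" for j
    using hR' that nx by simp
  have xB: "norm (x j) \<le> B" if "j \<in> E" for j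
    using hB' that nx by simp
  have pos: "norm (1 - x j) > 0" if "j \<in> R" for j
  proof -
    have "norm (x j) < 1" using xR[OF that] assms(5) by linarith
    hence "x j \<noteq> 1" by auto
    thus ?thesis by simp
  qed
  have prodeq: "(\<Prod>j\<in>R. norm (hp (w j) - zeta)) = exp (\<Sum>j\<in>R. ln (norm (1 - x j)))"
  proof -
    have "(\<Prod>j\<in>R. norm (hp (w j) - zeta)) = (\<Prod>j\<in>R. exp (ln (norm (1 - x j))))"
      using pos eqn by (intro prod.cong) auto
    also have "\<dots> = exp (\<Sum>j\<in>R. ln (norm (1 - x j)))" by (simp add: exp_sum finR)
    finally show ?thesis .
  qed
  have lnb: "(\<Sum>j\<in>R. ln (norm (1 - x j)))
      \<le> (\<Sum>j\<in>R. - Re (\<Sum>k=1..K. x j ^ k / of_nat k) + rho^(K+1)/(1-rho))"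
    by (rule sum_mono, rule ln_norm_bound[OF xR assms(5)])
  also have "\<dots> = (\<Sum>j\<in>R. - Re (\<Sum>k=1..K. x j ^ k / of_nat k)) + real (card R) * (rho^(K+1)/(1-rho))"
    by (simp only: sum.distrib sum_constant)
  also have "(\<Sum>j\<in>R. - Re (\<Sum>k=1..K. x j ^ k / of_nat k)) = - Re (\<Sum>k=1..K. (\<Sum>j\<in>R. x j ^ k) / of_nat k)"
  proof -
    have "(\<Sum>j\<in>R. (\<Sum>k=1..K. x j ^ k / of_nat k)) = (\<Sum>k=1..K. (\<Sum>j\<in>R. x j ^ k / of_nat k))"
      by (rule sum.swap)
    also have "\<dots> = (\<Sum>k=1..K. (\<Sum>j\<in>R. x j ^ k) / of_nat k)"
      by (simp add: sum_divide_distrib)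
    finally have "(\<Sum>j\<in>R. (\<Sum>k=1..K. x j ^ k / of_nat k)) = (\<Sum>k=1..K. (\<Sum>j\<in>R. x j ^ k) / of_nat k)" .
    hence "Re (\<Sum>j\<in>R. (\<Sum>k=1..K. x j ^ k / of_nat k)) = Re (\<Sum>k=1..K. (\<Sum>j\<in>R. x j ^ k) / of_nat k)"
      by simp
    thus ?thesis by (simp add: sum_negf Re_sum)
  qed
  also have "(\<Sum>k=1..K. (\<Sum>j\<in>R. x j ^ k) / of_nat k) = - (\<Sum>k=1..K. (\<Sum>j\<in>E. x j ^ k) / of_nat k)"
  proof -
    have "(\<Sum>j\<in>R. x j ^ k) = - (\<Sum>j\<in>E. x j ^ k)" if k: "k \<in> {1..K}" for k
    proof -
      have "k * r \<le> K * r" using k by simp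
      hence "int (k * r) \<le> int (K * r)" by (simp only: of_nat_le_iff)
      hence kr: "int (k * r) < m" using assms(3) by linarith
      have xe: "x j ^ k = (\<Sum>i\<in>{1..r}. (cnj zeta * c i) * w j ^ i) ^ k" for j
        by (simp add: x_def hp_def sum_distrib_left mult.assoc)
      have "(\<Sum>j\<in>{0..<m}. (\<Sum>i\<in>{1..r}. (cnj zeta * c i) * w j ^ i) ^ k) = 0"
        unfolding w_def by (rule power_sum_zero) (use k kr in auto)
      hence "(\<Sum>j\<in>{0..<m}. x j ^ k) = 0" by (simp only: xe)
      moreover have "(\<Sum>j\<in>{0..<m}. x j ^ k) = (\<Sum>j\<in>E. x j ^ k) + (\<Sum>j\<in>R. x j ^ k)"
        unfolding E_def by (rule sum.subset_diff[OF assms(2)]) simp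
      ultimately show ?thesis by (simp add: eq_neg_iff_add_eq_0 add.commute)
    qed
    hence "(\<Sum>k=1..K. (\<Sum>j\<in>R. x j ^ k) / of_nat k) = (\<Sum>k=1..K. - ((\<Sum>j\<in>E. x j ^ k) / of_nat k))"
      by (intro sum.cong) auto
    thus ?thesis by (simp add: sum_negf)
  qed
  also have "- Re (- (\<Sum>k=1..K. (\<Sum>j\<in>E. x j ^ k) / of_nat k))
      \<le> real (card E) * B^K * (\<Sum>k=1..K. 1 / real k)"
  proof -
    have "- Re (- (\<Sum>k=1..K. (\<Sum>j\<in>E. x j ^ k) / of_nat k)) \<le> norm (\<Sum>k=1..K. (\<Sum>j\<in>E. x j ^ k) / of_nat k)"
      using complex_Re_le_cmod[of "\<Sum>k=1..K. (\<Sum>j\<in>E. x j ^ k) / of_nat k"]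
      by (simp only: uminus_complex.sel minus_minus)
    also have "\<dots> \<le> (\<Sum>k=1..K. norm ((\<Sum>j\<in>E. x j ^ k) / of_nat k))" by (rule norm_sum)
    also have "\<dots> \<le> (\<Sum>k=1..K. real (card E) * B^K * (1 / real k))"
    proof (rule sum_mono)
      fix k assume k: "k \<in> {1..K}"
      have "norm (\<Sum>j\<in>E. x j ^ k) \<le> (\<Sum>j\<in>E. norm (x j) ^ k)"
        by (rule order_trans[OF norm_sum]) (simp add: norm_power)
      also have "\<dots> \<le> (\<Sum>j\<in>E. B ^ K)"
      proof (rule sum_mono)
        fix j assume j: "j \<in> E"
        have "norm (x j) ^ k \<le> B ^ k" by (rule power_mono[OF xB[OF j]]) simp
        also have "\<dots> \<le> B ^ K" using k assms(6) by (intro power_increasing) auto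
        finally show "norm (x j) ^ k \<le> B ^ K" .
      qed
      also have "\<dots> = real (card E) * B ^ K" by simp
      finally have a: "norm (\<Sum>j\<in>E. x j ^ k) \<le> real (card E) * B ^ K" .
      have "norm ((\<Sum>j\<in>E. x j ^ k) / of_nat k) = norm (\<Sum>j\<in>E. x j ^ k) * (1 / real k)"
        by (simp add: norm_divide)
      also have "\<dots> \<le> real (card E) * B ^ K * (1 / real k)"
        by (rule mult_right_mono[OF a]) simp
      finally show "norm ((\<Sum>j\<in>E. x j ^ k) / of_nat k) \<le> real (card E) * B^K * (1 / real k)" .
    qed
    also have "\<dots> = real (card E) * B^K * (\<Sum>k=1..K. 1 / real k)"
      by (simp add: sum_distrib_left)
    finally show ?thesis .
  qed
  finally have "(\<Sum>j\<in>R. ln (norm (1 - x j))) \<le> real (card E) * B^K * (\<Sum>k=1..K. 1 / real k) + real (card R) * (rho^(K+1)/(1-rho))"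
    by simp
  hence "(\<Prod>j\<in>R. norm (hp (w j) - zeta)) \<le> exp (real (card E) * B^K * (\<Sum>k=1..K. 1 / real k) + real (card R) * (rho^(K+1)/(1-rho)))"
    unfolding prodeq by simp
  thus ?thesis unfolding hp_def w_def E_def .
qed


lemma inv_sq_tail:
  fixes s r :: nat assumes "1 \<le> s" "s \<le> r"
  shows "(\<Sum>j=s+1..r. 1 / (real j)^2) \<le> 1 / real s - 1 / real r"
  using assms(2)
proof (induction r rule: dec_induct)
  case base thus ?case by simp
next
  case (step r)
  have r1: "real r \<ge> 1" using assms(1) step.hyps(1) by simp
  have e1: "1 / real r - 1 / real (Suc r) = 1 / (real r * (real r + 1))" using r1 by (simp add: field_simps)
  have e2: "(real r + 1)^2 = real r * (real r + 1) + (real r + 1)" by (simp add: power2_eq_square algebra_simps)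
  have ge: "real r * (real r + 1) \<le> (real r + 1)^2" using e2 r1 by linarith
  have "1 / (real r + 1)^2 \<le> 1 / (real r * (real r + 1))"
    by (rule divide_left_mono[OF ge]) (use r1 in auto)
  hence "1 / (real (Suc r))^2 \<le> 1 / real r - 1 / real (Suc r)" using e1 by (simp add: add.commute)
  thus ?case using step.IH step.hyps(1) by simp
qed

lemma ln_ge1: "real j + 3 \<ge> 3 \<Longrightarrow> ln (real j + 3) \<ge> 1"
proof -
  assume "real j + 3 \<ge> 3"
  have "exp 1 \<le> real j + 3" using exp_le by simp
  hence "ln (exp 1) \<le> ln (real j + 3)" by (subst ln_le_cancel_iff) auto
  thus ?thesis by simp
qed

lemma ltil_bound:
  fixes a :: real and rs :: "real \<Rightarrow> nat"
  defines "r \<equiv> rr a" and "s \<equiv> rs a"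
  defines "F \<equiv> real r / (ln (real r + 3)^2 + 1)"
  assumes ok: "rstar_ok a s" and r40: "real r \<ge> 40" and asy: "9 * real r / (F * ln (F + 4)^2) \<le> 10"
  shows "0 < ltil rs a \<and> ltil rs a \<le> 1 + 40 / real r"
proof -
  from ok have s1: "1 \<le> s" "s \<le> r" and D: "(\<Sum>j=1..s. 1 / (ln (real j + 3))^2) - (\<Sum>j=s+1..r. 1 / (ln (real j + 3))^2) \<ge> 20"
    unfolding rstar_ok_def r_def by auto
  define g where "g = (\<lambda>j::nat. 1 / ((real j)^2 * (ln (real j + 3))^2))"
  have l4: "ln (4::real) > 0" "ln (4::real) \<le> 3" using ln_le_minus_one[of 4] by auto
  have gpos: "g j > 0" if "j \<ge> 1" for j
  proof -
    have "ln (real j + 3) \<ge> 1" by (rule ln_ge1) simp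
    thus ?thesis using that by (simp add: g_def)
  qed
  have "g 1 \<le> (\<Sum>j=1..r. g j)"
    by (rule member_le_sum) (use s1 in \<open>auto intro!: less_imp_le gpos\<close>)
  moreover have "g 1 = 1 / (ln 4)^2" by (simp add: g_def)
  ultimately have Sg: "(\<Sum>j=1..r. g j) \<ge> 1 / (ln 4)^2" by simp
  have "0 < 1 / (ln (4::real))^2" using l4 by simp
  hence Sgp: "(\<Sum>j=1..r. g j) > 0" using Sg by linarith
  have lamd: "lam a = 1 / (\<Sum>j=1..r. g j)" by (simp add: lam_def g_def r_def)
  have lam9: "lam a \<le> 9"
  proof -
    have "lam a \<le> 1 / (1 / (ln 4)^2)" unfolding lamd
      by (rule divide_left_mono[OF Sg]) (use l4 Sgp in auto)
    also have "\<dots> = (ln 4)^2" by simp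
    also have "\<dots> \<le> 3^2" using l4 by (intro power_mono) auto
    finally show ?thesis by simp
  qed
  have lam0: "lam a > 0" using lamd Sgp by simp
  have ddg: "dd a j = lam a * g j" for j by (simp add: dd_def g_def)
  have split: "(\<Sum>j=1..r. f j) = (\<Sum>j=1..s. f j) + (\<Sum>j=s+1..r. f j)" for f :: "nat \<Rightarrow> real"
  proof -
    have "{1..r} = {1..s} \<union> {s+1..r}" using s1 by auto
    moreover have "{1..s} \<inter> {s+1..r} = {}" by auto
    ultimately show ?thesis by (simp add: sum.union_disjoint)
  qed
  have sum1: "(\<Sum>j=1..r. dd a j) = 1"
  proof -
    have "(\<Sum>j=1..r. dd a j) = lam a * (\<Sum>j=1..r. g j)" by (simp add: ddg sum_distrib_left)
    thus ?thesis using Sgp lamd by simp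
  qed
  define T where "T = (\<Sum>j=s+1..r. dd a j)"
  have epsum: "(\<Sum>j=1..r. eps s j * dd a j) = 1 - 2 * T"
  proof -
    have "(\<Sum>j=1..r. eps s j * dd a j) = (\<Sum>j=1..s. eps s j * dd a j) + (\<Sum>j=s+1..r. eps s j * dd a j)"
      by (rule split)
    also have "(\<Sum>j=1..s. eps s j * dd a j) = (\<Sum>j=1..s. dd a j)" by (intro sum.cong) (auto simp: eps_def)
    also have "(\<Sum>j=s+1..r. eps s j * dd a j) = - T" unfolding T_def
      by (simp add: sum_negf[symmetric]) (intro sum.cong, auto simp: eps_def)
    also have "(\<Sum>j=1..s. dd a j) = 1 - T" using sum1 split[of "dd a"] T_def by simp
    finally show ?thesis by simp
  qed
  define L where "L = ln (real r + 3)"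
  have L1: "L \<ge> 1" unfolding L_def by (rule ln_ge1) simp
  have u1: "(\<Sum>j=1..s. 1 / (ln (real j + 3))^2) \<le> real s"
  proof -
    have "(\<Sum>j=1..s. 1 / (ln (real j + 3))^2) \<le> (\<Sum>j=1..s. 1)"
    proof (rule sum_mono)
      fix j :: nat assume "j \<in> {1..s}"
      have "ln (real j + 3) \<ge> 1" by (rule ln_ge1) simp
      hence "(ln (real j + 3))^2 \<ge> 1" by (simp add: one_le_power)
      thus "1 / (ln (real j + 3))^2 \<le> 1" by simp
    qed
    thus ?thesis by simp
  qed
  have u2: "(\<Sum>j=s+1..r. 1 / (ln (real j + 3))^2) \<ge> real (r - s) / L^2"
  proof -
    have "(\<Sum>j=s+1..r. 1 / L^2) \<le> (\<Sum>j=s+1..r. 1 / (ln (real j + 3))^2)"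
    proof (rule sum_mono)
      fix j :: nat assume j: "j \<in> {s+1..r}"
      have "ln (real j + 3) \<ge> 1" by (rule ln_ge1) simp
      moreover have "ln (real j + 3) \<le> L" unfolding L_def using j by simp
      ultimately have le: "(ln (real j + 3))^2 \<le> L^2" by (intro power_mono) auto
      have p1: "0 < (ln (real j + 3))^2" using \<open>ln (real j + 3) \<ge> 1\<close> by simp
      have p2: "0 < L^2" using L1 by simp
      show "1 / L^2 \<le> 1 / (ln (real j + 3))^2"
        by (rule divide_left_mono[OF le]) (use p1 p2 in auto)
    qed
    thus ?thesis by simp
  qed
  have sL: "real s \<ge> real (r - s) / L^2" using D u1 u2 by linarith
  have Fs: "F \<le> real s"
  proof -
    have L2: "L^2 > 0" using L1 by simp
    have "real (r - s) \<le> real s * L^2" using sL L2 by (simp add: pos_divide_le_eq)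
    hence "real r \<le> real s * (L^2 + 1)" using s1 by (simp add: of_nat_diff algebra_simps)
    moreover have "L^2 + 1 > 0" using L2 by linarith
    ultimately show ?thesis unfolding F_def L_def[symmetric]
      by (simp add: pos_divide_le_eq)
  qed
  have F0: "F > 0" unfolding F_def using r40 by (simp add: add_pos_nonneg)
  have T1: "T \<le> 9 * (1 / (ln (real s + 4))^2 * (1 / real s))"
  proof -
    have "T = lam a * (\<Sum>j=s+1..r. g j)" by (simp add: T_def ddg sum_distrib_left)
    also have "(\<Sum>j=s+1..r. g j) \<le> (\<Sum>j=s+1..r. 1 / (ln (real s + 4))^2 * (1 / (real j)^2))"
    proof (rule sum_mono)
      fix j :: nat assume j: "j \<in> {s+1..r}"
      have "ln (real s + 4) \<le> ln (real j + 3)" using j by simp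
      moreover have "ln (real s + 4) > 0" by simp
      ultimately have "(ln (real s + 4))^2 \<le> (ln (real j + 3))^2" by (intro power_mono) auto
      moreover have "real j > 0" using j by simp
      ultimately have "(real j)^2 * (ln (real s + 4))^2 \<le> (real j)^2 * (ln (real j + 3))^2"
        by (intro mult_left_mono) auto
      moreover have "0 < (real j)^2 * (ln (real s + 4))^2" using \<open>real j > 0\<close> \<open>ln (real s + 4) > 0\<close> by simp
      ultimately have "1 / ((real j)^2 * (ln (real j + 3))^2) \<le> 1 / ((real j)^2 * (ln (real s + 4))^2)"
        by (metis divide_left_mono mult_pos_pos order_less_le_trans zero_le_one)
      thus "g j \<le> 1 / (ln (real s + 4))^2 * (1 / (real j)^2)" unfolding g_def by (simp add: mult.commute)
    qed
    also have "\<dots> = 1 / (ln (real s + 4))^2 * (\<Sum>j=s+1..r. 1 / (real j)^2)" by (simp add: sum_distrib_left)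
    also have "\<dots> \<le> 1 / (ln (real s + 4))^2 * (1 / real s)"
    proof -
      have "0 \<le> 1 / real r" by simp
      hence "(\<Sum>j=s+1..r. 1 / (real j)^2) \<le> 1 / real s" using inv_sq_tail[OF s1] by linarith
      thus ?thesis by (intro mult_left_mono) auto
    qed
    finally have "T \<le> lam a * (1 / (ln (real s + 4))^2 * (1 / real s))" using lam0 by (simp add: mult_left_mono)
    also have "\<dots> \<le> 9 * (1 / (ln (real s + 4))^2 * (1 / real s))"
      by (rule mult_right_mono[OF lam9]) simp
    finally show ?thesis .
  qed
  have mono: "F * (ln (F + 4))^2 \<le> real s * (ln (real s + 4))^2"
  proof -
    have "ln (F + 4) \<le> ln (real s + 4)" using Fs F0 by simp
    moreover have "ln (F + 4) \<ge> 0" using F0 by simp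
    ultimately have "(ln (F + 4))^2 \<le> (ln (real s + 4))^2" by (intro power_mono) auto
    thus ?thesis using Fs F0 by (intro mult_mono) auto
  qed
  have pF: "F * (ln (F + 4))^2 > 0" using F0 by (simp add: ln_gt_zero)
  have T2: "T \<le> 10 / real r"
  proof -
    have "T \<le> 9 / (real s * (ln (real s + 4))^2)" using T1 by (simp add: field_simps)
    also have "\<dots> \<le> 9 / (F * (ln (F + 4))^2)" using mono pF by (intro divide_left_mono) auto
    also have "\<dots> \<le> 10 / real r" using asy r40 pF by (simp add: field_simps)
    finally show ?thesis .
  qed
  have "10 / real r \<le> 1/4" using r40 by (simp add: field_simps)
  hence T14: "T \<le> 1/4" using T2 by linarith
  have T0: "T \<ge> 0" unfolding T_def using lam0 gpos ddg
    by (intro sum_nonneg) (simp add: less_imp_le)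
  have "ltil rs a = 1 / (\<Sum>j=1..r. eps s j * dd a j)" unfolding ltil_def r_def s_def ..
  hence lt: "ltil rs a = 1 / (1 - 2 * T)" by (simp only: epsum)
  have p: "1 - 2 * T > 0" using T14 by linarith
  have e: "(1 + 4 * T) * (1 - 2 * T) = 1 + 2 * T * (1 - 4 * T)" by (simp add: algebra_simps)
  have "2 * T * (1 - 4 * T) \<ge> 0" using T0 T14 by (intro mult_nonneg_nonneg) auto
  hence "1 \<le> (1 + 4 * T) * (1 - 2 * T)" using e by linarith
  hence "1 / (1 - 2 * T) \<le> 1 + 4 * T" using p by (simp add: divide_le_eq)
  moreover have "0 < 1 / (1 - 2 * T)" using p by simp
  ultimately show ?thesis using lt T2 by simp
qed


context fixes c4 c5 C6 :: real assumes c: "c4 > 0" "c5 > 0" "C6 > 0" begin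
lemma A1: "eventually (\<lambda>n. real n powr (2/5) / c4 - 1 \<ge> 1) sequentially" using c by real_asymp
lemma A2: "eventually (\<lambda>n. real n powr (-1/5) * (real n powr (2/5) / c4 - 1) * ln (real n)^4 / c5 - 1 \<ge> 1) sequentially" using c by real_asymp
lemma A3: "eventually (\<lambda>n. 2 * real n powr (-1/5) * ln (real n)^4 / c5 \<le> 1) sequentially" using c by real_asymp
lemma A4: "eventually (\<lambda>n. real n powr (-1/5) * ln (real n)^4 / c5 - 1 / (real n powr (2/5) / c4 - 1) > C6 * real n powr (-1/5)) sequentially" using c by real_asymp
lemma A5: "eventually (\<lambda>n. c5 * (real n powr (-1/5) * ln (real n)^4 / c5) / (2/5 * ln (real n))^2 \<le> 1) sequentially" using c by real_asymp
lemma A6: "eventually (\<lambda>n. real n powr (1/5) / (2*c4) * real n powr (1/5) < real n powr (2/5) / c4 - 1) sequentially" using c by real_asymp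
lemma A7: "eventually (\<lambda>n. (real n powr (-1/5) * ln (real n)^4 - c5 / (real n powr (2/5) / c4 - 1)) / (2/5 * ln (real n))^2 > 0) sequentially" using c by real_asymp
lemma A8: "eventually (\<lambda>n. (real n powr (2/5) / c4) * exp (- ((real n powr (-1/5) * ln (real n)^4 - c5 / (real n powr (2/5) / c4 - 1)) / (2/5 * ln (real n))^2) * (real n powr (1/5) / (2*c4) - 1))
   / ((real n powr (-1/5) * ln (real n)^4 - c5 / (real n powr (2/5) / c4 - 1)) / (2/5 * ln (real n))^2) \<le> real n powr (1/5) * ln (real n) ^ 5) sequentially" using c by real_asymp
lemma A9: "eventually (\<lambda>n. 1 + ln (real n) \<le> 2 * ln (real n)) sequentially" by real_asymp
lemma A10: "eventually (\<lambda>n. real n powr (1/5) \<ge> 2) sequentially" by real_asymp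
lemma A10b: "eventually (\<lambda>n. ln (real n) \<ge> 1) sequentially" by real_asymp
lemma A11: "filterlim (\<lambda>n. real n powr (1/5)) at_top sequentially" by real_asymp
end


lemma r_asym: "eventually (\<lambda>r::nat. 9 * real r / ((real r / (ln (real r + 3)^2 + 1)) * ln (real r / (ln (real r + 3)^2 + 1) + 4)^2) \<le> 10) sequentially"
  by real_asymp

lemma aa_lim: "filterlim aa (at_right 0) sequentially"
  unfolding aa_def by real_asymp

lemma hh_poly:
  "hh rs a z = (\<Sum>i\<in>{1..rr a}. of_real ((1 - a^10) * ltil rs a * (eps (rs a) i * dd a i)) * z^i)"
  unfolding hh_def htil_def by (simp add: sum_distrib_left mult.assoc)

lemma dd_nonneg: "dd a j \<ge> 0"
proof -
  have "(\<Sum>j=1..rr a. 1 / ((real j)^2 * (ln (real j + 3))^2)) \<ge> 0" by (intro sum_nonneg) simp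
  hence "lam a \<ge> 0" unfolding lam_def by simp
  thus ?thesis unfolding dd_def by simp
qed

lemma dd_sum: assumes "rr a \<ge> 1" shows "(\<Sum>j=1..rr a. dd a j) = 1"
proof -
  define g where "g = (\<lambda>j::nat. 1 / ((real j)^2 * (ln (real j + 3))^2))"
  have gpos: "g j > 0" if "j \<ge> 1" for j
  proof -
    have "ln (real j + 3) \<ge> 1" by (rule ln_ge1) simp
    thus ?thesis using that by (simp add: g_def)
  qed
  have "g 1 \<le> (\<Sum>j=1..rr a. g j)"
    by (rule member_le_sum) (use assms in \<open>auto intro!: less_imp_le gpos\<close>)
  hence Sgp: "(\<Sum>j=1..rr a. g j) > 0" using gpos[of 1] by linarith
  have "(\<Sum>j=1..rr a. dd a j) = lam a * (\<Sum>j=1..rr a. g j)"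
    by (simp add: dd_def g_def sum_distrib_left)
  also have "lam a = 1 / (\<Sum>j=1..rr a. g j)" by (simp add: lam_def g_def)
  finally show ?thesis using Sgp by simp
qed

lemma hh_bound:
  assumes "norm z = 1" "0 \<le> 1 - a^10" "1 - a^10 \<le> 1" "ltil rs a > 0" "rr a \<ge> 1"
  shows "norm (hh rs a z) \<le> ltil rs a"
proof -
  have "norm (hh rs a z) \<le> (\<Sum>i\<in>{1..rr a}. norm (of_real ((1 - a^10) * ltil rs a * (eps (rs a) i * dd a i)) * z^i))"
    unfolding hh_poly by (rule norm_sum)
  also have "\<dots> = (\<Sum>i\<in>{1..rr a}. (1 - a^10) * ltil rs a * dd a i)"
  proof (rule sum.cong[OF refl])
    fix i
    have "\<bar>eps (rs a) i\<bar> = 1" by (simp add: eps_def)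
    have "norm (of_real ((1 - a^10) * ltil rs a * (eps (rs a) i * dd a i)) * z^i)
        = \<bar>(1 - a^10) * ltil rs a * (eps (rs a) i * dd a i)\<bar>"
      by (simp only: norm_mult norm_of_real norm_power assms(1) power_one mult_1_right)
    also have "\<dots> = (1 - a^10) * ltil rs a * dd a i"
      using assms dd_nonneg[of a i] \<open>\<bar>eps (rs a) i\<bar> = 1\<close> by (simp add: abs_mult)
    finally show "norm (of_real ((1 - a^10) * ltil rs a * (eps (rs a) i * dd a i)) * z^i) = (1 - a^10) * ltil rs a * dd a i" .
  qed
  also have "\<dots> = (1 - a^10) * ltil rs a" using dd_sum[OF assms(5)] by (simp add: sum_distrib_left[symmetric])
  also have "\<dots> \<le> 1 * ltil rs a" using assms by (intro mult_right_mono) auto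
  finally show ?thesis by simp
qed


lemma t_bound:
  fixes a C6 c5 delta :: real and m J1 J2 j :: int
  assumes hyp6: "\<forall>t::real. \<bar>t\<bar> \<le> 1/2 \<and> \<bar>t\<bar> > C6 * sqrt a \<longrightarrow>
           norm (hh rs a (cis (2 * pi * t))) \<le> 1 - c5 * \<bar>t\<bar> / (ln (1 / a))^2"
    and c5: "c5 > 0" and m0: "m > 0" and J2: "J2 = m - J1" and J1nn: "J1 \<ge> 0"
    and Jsq: "of_int J1 / of_int m > C6 * sqrt a"
    and j: "J1 \<le> j" "j < J2" and d: "0 \<le> delta" "delta < 1"
  shows "norm (hh rs a (cis (2 * pi * (of_int j + delta) / of_int m))) \<le> 1 - c5 * (of_int J1 / of_int m) / (ln (1 / a))^2"
proof -
  define t where "t = (of_int j + delta) / of_int m"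
  define L where "L = (ln (1 / a))^2"
  have L0: "L \<ge> 0" by (simp add: L_def)
  have mr: "real_of_int m > 0" using m0 by simp
  have w: "2 * pi * (of_int j + delta) / of_int m = 2 * pi * t" by (simp add: t_def)
  have key: "norm (hh rs a (cis (2 * pi * u))) \<le> 1 - c5 * (of_int J1 / of_int m) / L"
    if u: "\<bar>u\<bar> \<le> 1/2" "\<bar>u\<bar> \<ge> of_int J1 / of_int m" for u
  proof -
    have "\<bar>u\<bar> > C6 * sqrt a" using u Jsq by linarith
    hence "norm (hh rs a (cis (2 * pi * u))) \<le> 1 - c5 * \<bar>u\<bar> / L" using hyp6 u by (simp add: L_def)
    moreover have "c5 * (of_int J1 / of_int m) / L \<le> c5 * \<bar>u\<bar> / L"
      using u c5 L0 by (intro divide_right_mono mult_left_mono) auto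
    ultimately show ?thesis by linarith
  qed
  have tlow: "t \<ge> of_int J1 / of_int m" unfolding t_def
    using j d mr by (intro divide_right_mono) auto
  have "real_of_int j + 1 \<le> of_int J2" using j by linarith
  hence "real_of_int j + delta < of_int m - of_int J1" using d J2 by simp
  hence "t < (of_int m - of_int J1) / of_int m" unfolding t_def using mr by (intro divide_strict_right_mono) auto
  also have "\<dots> = 1 - of_int J1 / of_int m" using mr by (simp add: field_simps)
  finally have thigh: "t < 1 - of_int J1 / of_int m" .
  have J10: "of_int J1 / of_int m \<ge> (0::real)"
    using J1nn mr by simp
  show ?thesis
  proof (cases "t \<le> 1/2")
    case True
    hence "\<bar>t\<bar> \<le> 1/2" "\<bar>t\<bar> \<ge> of_int J1 / of_int m" using tlow J10 by auto
    from key[OF this] show ?thesis unfolding w L_def .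
  next
    case False
    have c: "cis (2 * pi * t) = cis (2 * pi * (t - 1))"
    proof -
      have "cis (2 * pi * (t - 1)) = cis (2 * pi * (t - 1)) * cis (2 * pi)" by simp
      also have "\<dots> = cis (2 * pi * t)" by (simp add: cis_mult algebra_simps)
      finally show ?thesis by simp
    qed
    have "\<bar>t - 1\<bar> \<le> 1/2" "\<bar>t - 1\<bar> \<ge> of_int J1 / of_int m" using False thigh J10 by auto
    from key[OF this] show ?thesis unfolding w c L_def .
  qed
qed


lemma fixed_n:
  fixes a C6 c5 delta B :: real and m J1 J2 :: int and K :: nat and zeta :: complex
  assumes hyp6: "\<forall>t::real. \<bar>t\<bar> \<le> 1/2 \<and> \<bar>t\<bar> > C6 * sqrt a \<longrightarrow>
           norm (hh rs a (cis (2 * pi * t))) \<le> 1 - c5 * \<bar>t\<bar> / (ln (1 / a))^2"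
    and c5: "c5 > 0" and a01: "0 < a" "a \<le> 1"
    and lt: "0 < ltil rs a" "ltil rs a \<le> B" and B1: "1 \<le> B" and r1: "rr a \<ge> 1"
    and J2: "J2 = m - J1" and J1p: "J1 \<ge> 1" and J12: "2 * J1 \<le> m"
    and Jsq: "of_int J1 / of_int m > C6 * sqrt a"
    and L0: "ln (1 / a) \<noteq> 0"
    and Kr: "int (K * rr a) < m"
    and zeta: "norm zeta = 1" and d: "0 \<le> delta" "delta < 1"
  shows "(\<Prod>j\<in>{J1..<J2}. norm (hh rs a (cis (2 * pi * (of_int j + delta) / of_int m)) - zeta))
     \<le> exp (real_of_int (2 * J1) * B^K * (\<Sum>k=1..K. 1 / real k) + real_of_int (J2 - J1) *
          ((1 - c5 * (of_int J1 / of_int m) / (ln (1 / a))^2)^(K+1) / (c5 * (of_int J1 / of_int m) / (ln (1 / a))^2)))"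
proof -
  define eta where "eta = c5 * (of_int J1 / of_int m) / (ln (1 / a))^2"
  define c where "c = (\<lambda>i. complex_of_real ((1 - a^10) * ltil rs a * (eps (rs a) i * dd a i)))"
  have hp: "hh rs a z = (\<Sum>i\<in>{1..rr a}. c i * z^i)" for z unfolding c_def by (rule hh_poly)
  have m0: "m > 0" using J1p J12 by linarith
  have R: "{J1..<J2} \<subseteq> {0..<m}" using J1p J2 by auto
  have eta0: "eta > 0" unfolding eta_def using c5 J1p m0 L0 by (intro divide_pos_pos mult_pos_pos) auto
  have hR: "\<forall>j\<in>{J1..<J2}. norm (\<Sum>i\<in>{1..rr a}. c i * cis (2 * pi * (of_int j + delta) / of_int m) ^ i) \<le> 1 - eta"
  proof
    fix j assume j: "j \<in> {J1..<J2}"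
    have "norm (hh rs a (cis (2 * pi * (of_int j + delta) / of_int m))) \<le> 1 - eta"
      unfolding eta_def
      by (rule t_bound[OF hyp6 c5 m0 J2 _ Jsq _ _ d]) (use j J1p in auto)
    thus "norm (\<Sum>i\<in>{1..rr a}. c i * cis (2 * pi * (of_int j + delta) / of_int m) ^ i) \<le> 1 - eta"
      by (simp only: hp)
  qed
  have a10: "0 \<le> 1 - a^10" "1 - a^10 \<le> 1" using a01 by (auto simp: power_le_one)
  have hB: "\<forall>j\<in>{0..<m}. norm (\<Sum>i\<in>{1..rr a}. c i * cis (2 * pi * (of_int j + delta) / of_int m) ^ i) \<le> B"
  proof
    fix j assume j: "j \<in> {0..<m}"
    have "norm (hh rs a (cis (2 * pi * (of_int j + delta) / of_int m))) \<le> ltil rs a"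
      by (rule hh_bound[OF norm_cis a10 lt(1) r1])
    thus "norm (\<Sum>i\<in>{1..rr a}. c i * cis (2 * pi * (of_int j + delta) / of_int m) ^ i) \<le> B"
      using lt(2) by (simp only: hp)
  qed
  have rho1: "1 - eta < 1" using eta0 by simp
  have main: "(\<Prod>j\<in>{J1..<J2}. norm ((\<Sum>i\<in>{1..rr a}. c i * cis (2 * pi * (of_int j + delta) / of_int m) ^ i) - zeta))
     \<le> exp (real (card ({0..<m} - {J1..<J2})) * B^K * (\<Sum>k=1..K. 1 / real k) + real (card {J1..<J2}) * ((1 - eta)^(K+1)/(1-(1 - eta))))"
    by (rule core[OF m0 R Kr zeta rho1 B1 hR hB])
  have cE: "real (card ({0..<m} - {J1..<J2})) = real_of_int (2 * J1)"
  proof -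
    have "card ({0..<m} - {J1..<J2}) = card {0..<m} - card {J1..<J2}"
      by (rule card_Diff_subset[OF _ R]) simp
    also have "\<dots> = nat m - nat (J2 - J1)" by simp
    also have "\<dots> = nat (2 * J1)" using J2 J1p J12 by (simp add: nat_diff_distrib[symmetric])
    finally show ?thesis using J1p by simp
  qed
  have cR: "real (card {J1..<J2}) = real_of_int (J2 - J1)" using J2 J12 by simp
  have "(\<Prod>j\<in>{J1..<J2}. norm (hh rs a (cis (2 * pi * (of_int j + delta) / of_int m)) - zeta))
     = (\<Prod>j\<in>{J1..<J2}. norm ((\<Sum>i\<in>{1..rr a}. c i * cis (2 * pi * (of_int j + delta) / of_int m) ^ i) - zeta))"
    by (simp only: hp)
  also note main
  finally show ?thesis unfolding cE cR eta_def by simp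
qed


lemma harm_bound: "(\<Sum>k=1..K. 1 / real k) \<le> 1 + ln (real K)" if "K \<ge> 1"
proof -
  have "(\<Sum>k=1..K. 1 / real k) = harm K" by (simp add: harm_def divide_inverse)
  moreover have "harm K - ln (of_nat K) \<le> harm 1 - ln (of_nat 1 :: real)"
    by (rule euler_mascheroni_sequence_decreasing) (use that in auto)
  moreover have "harm 1 = (1::real)" by (simp add: harm_def)
  ultimately show ?thesis by simp
qed

lemma final_n:
  fixes n :: nat and c4 c5 C6 delta :: real and rs :: "real \<Rightarrow> nat" and zeta :: complex
  assumes c4: "c4 > 0" and c5: "c5 > 0" and n1: "n \<ge> 1"
    and hyp6: "\<forall>t::real. \<bar>t\<bar> \<le> 1/2 \<and> \<bar>t\<bar> > C6 * sqrt (aa n) \<longrightarrow>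
           norm (hh rs (aa n) (cis (2 * pi * t))) \<le> 1 - c5 * \<bar>t\<bar> / (ln (1 / aa n))^2"
    and ok: "rstar_ok (aa n) (rs (aa n))"
    and rA: "9 * real (rr (aa n)) / ((real (rr (aa n)) / (ln (real (rr (aa n)) + 3)^2 + 1)) * ln (real (rr (aa n)) / (ln (real (rr (aa n)) + 3)^2 + 1) + 4)^2) \<le> 10"
    and r40: "real (rr (aa n)) \<ge> 40"
    and A1: "real n powr (2/5) / c4 - 1 \<ge> 1"
    and A2: "real n powr (-1/5) * (real n powr (2/5) / c4 - 1) * ln (real n)^4 / c5 - 1 \<ge> 1"
    and A3: "2 * real n powr (-1/5) * ln (real n)^4 / c5 \<le> 1"
    and A4: "real n powr (-1/5) * ln (real n)^4 / c5 - 1 / (real n powr (2/5) / c4 - 1) > C6 * real n powr (-1/5)"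
    and A5: "c5 * (real n powr (-1/5) * ln (real n)^4 / c5) / (2/5 * ln (real n))^2 \<le> 1"
    and A6: "real n powr (1/5) / (2*c4) * real n powr (1/5) < real n powr (2/5) / c4 - 1"
    and A7: "(real n powr (-1/5) * ln (real n)^4 - c5 / (real n powr (2/5) / c4 - 1)) / (2/5 * ln (real n))^2 > 0"
    and A8: "(real n powr (2/5) / c4) * exp (- ((real n powr (-1/5) * ln (real n)^4 - c5 / (real n powr (2/5) / c4 - 1)) / (2/5 * ln (real n))^2) * (real n powr (1/5) / (2*c4) - 1))
   / ((real n powr (-1/5) * ln (real n)^4 - c5 / (real n powr (2/5) / c4 - 1)) / (2/5 * ln (real n))^2) \<le> real n powr (1/5) * ln (real n) ^ 5"
    and A9: "1 + ln (real n) \<le> 2 * ln (real n)"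
    and A10: "real n powr (1/5) \<ge> 2"
    and A10b: "ln (real n) \<ge> 1"
    and A12: "real n powr (1/5) / (2*c4) \<le> real n"
    and zeta: "norm zeta = 1" and d: "0 \<le> delta" "delta < 1"
  shows "(\<Prod>j\<in>{JJ1 c4 c5 n..<JJ2 c4 c5 n}.
              norm (hh rs (aa n) (cis (2 * pi * (of_int j + delta) / of_int (mm c4 n))) - zeta))
           \<le> exp ((4 * exp (40 / c4) / (c4 * c5) + 1) * real n powr (1/5) * (ln (real n))^5)"
proof -
  define N where "N = real n powr (1/5)"
  define P where "P = real n powr (-1/5)"
  define X where "X = real n powr (2/5) / c4"
  define l where "l = ln (real n)"
  define a where "a = aa n"
  define r where "r = rr a"
  define m where "m = mm c4 n"
  define J1 where "J1 = JJ1 c4 c5 n"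
  define J2 where "J2 = JJ2 c4 c5 n"
  define K where "K = nat \<lfloor>N / (2 * c4)\<rfloor>"
  define B where "B = 1 + 40 / real r"
  define e1 where "e1 = (P * l^4 - c5 / (X - 1)) / (2/5 * l)^2"
  define eta where "eta = c5 * (of_int J1 / of_int m) / (ln (1 / a))^2"
  have A1': "X - 1 \<ge> 1" using A1 unfolding X_def .
  have A2': "P * (X - 1) * l^4 / c5 - 1 \<ge> 1" using A2 unfolding P_def X_def l_def .
  have A3': "2 * P * l^4 / c5 \<le> 1" using A3 unfolding P_def l_def .
  have A4': "P * l^4 / c5 - 1 / (X - 1) > C6 * P" using A4 unfolding P_def X_def l_def .
  have A5': "c5 * (P * l^4 / c5) / (2/5 * l)^2 \<le> 1" using A5 unfolding P_def l_def .
  have A6': "N / (2*c4) * N < X - 1" using A6 unfolding N_def X_def .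
  have A7': "e1 > 0" using A7 unfolding e1_def P_def X_def l_def .
  have A8': "X * exp (- e1 * (N / (2*c4) - 1)) / e1 \<le> N * l^5" using A8 unfolding e1_def P_def X_def l_def N_def .
  have A9': "1 + l \<le> 2 * l" using A9 unfolding l_def .
  have A10': "N \<ge> 2" using A10 unfolding N_def .
  have A10b': "l \<ge> 1" using A10b unfolding l_def .
  have A12': "N / (2*c4) \<le> real n" using A12 unfolding N_def .
  have n0: "real n > 0" using n1 by simp
  have a_def': "a = real n powr (-2/5)" by (simp add: a_def aa_def)
  have a0: "a > 0" using n0 by (simp add: a_def')
  have a1: "a \<le> 1"
  proof -
    have "1 \<le> real n powr (2/5)" using n1 by (intro ge_one_powr_ge_zero) auto
    moreover have "a = 1 / real n powr (2/5)" unfolding a_def' using powr_minus_divide[of "real n" "2/5"] by simp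
    ultimately show ?thesis using n1 by (simp add: divide_le_eq_1)
  qed
  have apow: "a powr (-1/2) = N" unfolding a_def' N_def by (simp add: powr_powr)
  have r_eq: "r = nat \<lfloor>N\<rfloor>" unfolding r_def rr_def apow ..
  have N0: "N \<ge> 0" unfolding N_def by simp
  have rN: "real r \<le> N" "real r \<ge> N - 1" using N0 unfolding r_eq by linarith+
  have sqa: "sqrt a = P" unfolding a_def' P_def
    by (simp add: powr_half_sqrt[symmetric] powr_powr)
  have lna: "ln (1 / a) = 2/5 * l"
  proof -
    have "1 / a = real n powr (2/5)" unfolding a_def' using powr_minus_divide[of "real n" "2/5"] by simp
    thus ?thesis by (simp add: l_def)
  qed
  have PX: "P * X = N / c4"
  proof -
    have "P * real n powr (2/5) = N" unfolding P_def N_def by (simp add: powr_add[symmetric])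
    thus ?thesis unfolding X_def by simp
  qed
  have m_eq: "m = \<lfloor>X\<rfloor>" by (simp add: m_def mm_def X_def)
  have mX: "real_of_int m \<le> X" "real_of_int m > X - 1" unfolding m_eq by linarith+
  have m0: "real_of_int m > 0" using mX A1' by linarith
  have J1_eq: "J1 = \<lfloor>P * of_int m * l^4 / c5\<rfloor>" by (simp add: J1_def JJ1_def P_def m_def l_def)
  have J1b: "real_of_int J1 \<le> P * of_int m * l^4 / c5" "real_of_int J1 > P * of_int m * l^4 / c5 - 1"
    unfolding J1_eq by linarith+
  have J2_eq: "J2 = m - J1" by (simp add: J2_def JJ2_def m_def J1_def)
  have P0: "P > 0" unfolding P_def using n0 by simp
  have Pl0: "P * l^4 / c5 \<ge> 0" using P0 c5 by simp
  have J1p: "J1 \<ge> 1"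
  proof -
    have "P * (X - 1) * l^4 / c5 \<le> P * of_int m * l^4 / c5"
      using mX P0 c5 by (intro divide_right_mono mult_right_mono mult_left_mono) auto
    hence "real_of_int J1 > 1" using J1b A2' by linarith
    thus ?thesis by simp
  qed
  have J12: "2 * J1 \<le> m"
  proof -
    have e: "2 * P * l^4 / c5 * of_int m = 2 * (P * of_int m * l^4 / c5)" by (simp add: field_simps)
    have "2 * real_of_int J1 \<le> 2 * P * l^4 / c5 * of_int m" unfolding e using J1b by linarith
    also have "\<dots> \<le> 1 * of_int m" using A3' m0 by (intro mult_right_mono) auto
    finally show ?thesis by simp
  qed
  have J1m_up: "of_int J1 / of_int m \<le> P * l^4 / c5"
    using J1b m0 by (simp add: divide_le_eq mult.commute mult.left_commute)
  have J1m_low: "of_int J1 / of_int m \<ge> P * l^4 / c5 - 1 / (X - 1)"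
  proof -
    have "of_int J1 / of_int m \<ge> (P * of_int m * l^4 / c5 - 1) / of_int m"
      using J1b m0 by (intro divide_right_mono) auto
    also have "(P * of_int m * l^4 / c5 - 1) / of_int m = P * l^4 / c5 - 1 / of_int m"
      using m0 by (simp add: field_simps)
    also have "1 / real_of_int m \<le> 1 / (X - 1)" using mX A1' by (intro divide_left_mono) auto
    hence "P * l^4 / c5 - 1 / of_int m \<ge> P * l^4 / c5 - 1 / (X - 1)" by linarith
    finally show ?thesis .
  qed
  have Jsq: "of_int J1 / of_int m > C6 * sqrt a" unfolding sqa using J1m_low A4' by linarith
  have L0: "ln (1 / a) \<noteq> 0" using lna A10b' by simp
  have Kb: "real K \<le> N / (2 * c4)" "real K \<ge> N / (2 * c4) - 1"
  proof -
    have "N / (2 * c4) \<ge> 0" using N0 c4 by simp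
    thus "real K \<le> N / (2 * c4)" "real K \<ge> N / (2 * c4) - 1" unfolding K_def by linarith+
  qed
  have Kr: "int (K * r) < m"
  proof -
    have "real K * real r \<le> N / (2 * c4) * N"
      using Kb rN by (intro mult_mono) auto
    hence "real (K * r) < real_of_int m" using A6' mX by simp
    thus ?thesis by linarith
  qed
  have r1: "r \<ge> 1" using r40 unfolding r_def a_def by simp
  have ltb: "0 < ltil rs a \<and> ltil rs a \<le> 1 + 40 / real r"
    unfolding r_def by (rule ltil_bound) (use ok rA r40 in \<open>simp_all add: a_def\<close>)
  have B1: "1 \<le> B" unfolding B_def by simp
  have hyp6': "\<forall>t::real. \<bar>t\<bar> \<le> 1/2 \<and> \<bar>t\<bar> > C6 * sqrt a \<longrightarrow>
           norm (hh rs a (cis (2 * pi * t))) \<le> 1 - c5 * \<bar>t\<bar> / (ln (1 / a))^2"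
    using hyp6 unfolding a_def .
  have FN: "(\<Prod>j\<in>{J1..<J2}. norm (hh rs a (cis (2 * pi * (of_int j + delta) / of_int m)) - zeta))
     \<le> exp (real_of_int (2 * J1) * B^K * (\<Sum>k=1..K. 1 / real k) + real_of_int (J2 - J1) * ((1 - eta)^(K+1) / eta))"
    unfolding eta_def
    by (rule fixed_n[OF hyp6' c5 a0 a1 _ _ B1 _ J2_eq J1p J12 Jsq L0 _ zeta d])
       (use ltb r1 Kr in \<open>simp_all add: B_def r_def\<close>)
  define E0 where "E0 = exp (40 / c4)"
  define H where "H = (\<Sum>k=1..K. 1 / real k)"
  have H0: "H \<ge> 0" unfolding H_def by (intro sum_nonneg) simp
  have rpos: "real r > 0" using r1 by simp
  have BK: "B ^ K \<le> E0"
  proof -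
    have "B \<le> exp (40 / real r)" unfolding B_def using exp_ge_add_one_self[of "40 / real r"] by simp
    hence "B ^ K \<le> exp (40 / real r) ^ K" using B1 by (intro power_mono) auto
    also have "\<dots> = exp (real K * (40 / real r))" by (simp only: exp_of_nat_mult)
    also have "real K * (40 / real r) \<le> 40 / c4"
    proof -
      have "real K * c4 \<le> N / 2" using Kb(1) c4 by (simp add: field_simps)
      also have "N / 2 \<le> real r" using rN A10' by linarith
      finally have "real K * c4 \<le> real r" .
      hence "real K / real r \<le> 1 / c4" using c4 rpos by (simp add: field_simps)
      hence "40 * (real K / real r) \<le> 40 * (1 / c4)" by simp
      thus ?thesis by (simp add: field_simps)
    qed
    hence "exp (real K * (40 / real r)) \<le> E0" unfolding E0_def by simp
    finally show ?thesis .
  qed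
  have Hb: "H \<le> 1 + l"
  proof (cases "K = 0")
    case True thus ?thesis using A10b' by (simp add: H_def)
  next
    case False
    hence "H \<le> 1 + ln (real K)" unfolding H_def by (intro harm_bound) simp
    also have "ln (real K) \<le> l" unfolding l_def using False Kb(1) A12' by simp
    finally show ?thesis by simp
  qed
  have J1X: "real_of_int J1 \<le> N / c4 * l^4 / c5"
  proof -
    have "P * of_int m * l^4 / c5 \<le> P * X * l^4 / c5"
      using mX P0 c5 by (intro divide_right_mono mult_right_mono mult_left_mono) auto
    thus ?thesis using J1b PX by simp
  qed
  have t1: "real_of_int (2 * J1) * B^K * H \<le> 4 * E0 / (c4 * c5) * N * l^5"
  proof -
    have "real_of_int (2 * J1) * B^K * H \<le> (2 * (N / c4 * l^4 / c5)) * E0 * (1 + l)"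
      using J1X BK Hb H0 J1p B1 N0 c4 c5 A10b' by (intro mult_mono) (auto simp: E0_def)
    also have "\<dots> \<le> (2 * (N / c4 * l^4 / c5)) * E0 * (2 * l)"
      using A9' N0 c4 c5 by (intro mult_left_mono) (auto simp: E0_def)
    also have "\<dots> = 4 * E0 / (c4 * c5) * N * l^5" by (simp add: field_simps power_Suc[symmetric])
    finally show ?thesis .
  qed
  have eta_eq: "eta = c5 * (of_int J1 / of_int m) / (2/5 * l)^2" unfolding eta_def lna ..
  have l0: "(2/5 * l)^2 > 0" using A10b' by simp
  have eta_low: "e1 \<le> eta"
  proof -
    have "c5 * (P * l^4 / c5 - 1 / (X - 1)) = P * l^4 - c5 / (X - 1)" using c5 by (simp add: right_diff_distrib)
    hence "e1 = c5 * (P * l^4 / c5 - 1 / (X - 1)) / (2/5 * l)^2" unfolding e1_def by simp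
    also have "\<dots> \<le> eta" unfolding eta_eq using J1m_low c5 l0 by (intro divide_right_mono mult_left_mono) auto
    finally show ?thesis .
  qed
  have eta_up: "eta \<le> 1"
  proof -
    have "eta \<le> c5 * (P * l^4 / c5) / (2/5 * l)^2" unfolding eta_eq using J1m_up c5 l0
      by (intro divide_right_mono mult_left_mono) auto
    thus ?thesis using A5' by linarith
  qed
  have eta0: "eta > 0" using eta_low A7' by linarith
  have t2: "real_of_int (J2 - J1) * ((1 - eta)^(K+1) / eta) \<le> N * l^5"
  proof -
    have q: "(1 - eta)^(K+1) \<le> exp (- e1 * (N / (2*c4) - 1))"
    proof -
      have "(1 - eta)^(K+1) \<le> (1 - eta)^K" using eta_up eta0 by (intro power_decreasing) auto
      also have "\<dots> \<le> exp (- eta) ^ K" using eta_up exp_ge_add_one_self[of "- eta"] by (intro power_mono) auto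
      also have "\<dots> = exp (real K * (- eta))" by (simp only: exp_of_nat_mult)
      also have "\<dots> \<le> exp (- e1 * (N / (2*c4) - 1))"
      proof -
        have "e1 * (N / (2*c4) - 1) \<le> eta * real K"
        proof (cases "N / (2*c4) - 1 \<ge> 0")
          case True thus ?thesis using eta_low Kb(2) A7' by (intro mult_mono) auto
        next
          case False
          hence "e1 * (N / (2*c4) - 1) \<le> 0" using A7' by (intro mult_nonneg_nonpos) auto
          moreover have "eta * real K \<ge> 0" using eta0 by simp
          ultimately show ?thesis by linarith
        qed
        thus ?thesis by (simp add: mult.commute)
      qed
      finally show ?thesis .
    qed
    have "(1 - eta)^(K+1) / eta \<le> exp (- e1 * (N / (2*c4) - 1)) / e1"
      using q eta_low A7' eta0 by (intro frac_le) auto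
    moreover have "0 \<le> (1 - eta)^(K+1) / eta" using eta_up eta0 by simp
    moreover have "real_of_int (J2 - J1) \<le> X" using J2_eq J1p mX by simp
    moreover have "0 \<le> real_of_int (J2 - J1)" using J2_eq J12 by simp
    ultimately have "real_of_int (J2 - J1) * ((1 - eta)^(K+1) / eta) \<le> X * (exp (- e1 * (N / (2*c4) - 1)) / e1)"
      by (intro mult_mono) auto
    also have "\<dots> \<le> N * l^5" using A8' by simp
    finally show ?thesis .
  qed
  have "(\<Prod>j\<in>{J1..<J2}. norm (hh rs a (cis (2 * pi * (of_int j + delta) / of_int m)) - zeta))
      \<le> exp ((4 * E0 / (c4 * c5) + 1) * N * l^5)"
  proof -
    have "real_of_int (2 * J1) * B^K * H + real_of_int (J2 - J1) * ((1 - eta)^(K+1) / eta)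
        \<le> (4 * E0 / (c4 * c5) + 1) * N * l^5" using t1 t2 by (simp add: algebra_simps)
    thus ?thesis using FN unfolding H_def by (meson exp_le_cancel_iff order_trans)
  qed
  thus ?thesis unfolding J1_def J2_def a_def m_def N_def l_def E0_def .
qed


lemma A12: "c4 > 0 \<Longrightarrow> eventually (\<lambda>n. real n powr (1/5) / (2*c4) \<le> real n) sequentially"
  by real_asymp

lemma ev_compose: "eventually P (at_right 0) \<Longrightarrow> eventually (\<lambda>n. P (aa n)) sequentially"
  using aa_lim unfolding filterlim_iff by blast

theorem lemma9:
  fixes c4 c5 C6 :: real and rs :: "real \<Rightarrow> nat"
  assumes "c4 > 0" and "c5 > 0" and "C6 > 0"
    and "\<forall>\<^sub>F a in at_right 0. rstar_ok a (rs a)"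
    and "\<forall>\<^sub>F a in at_right 0. \<forall>t::real. \<bar>t\<bar> \<le> c4 * a \<longrightarrow> hh rs a (cis (2 * pi * t)) \<in> Ga a"
    and "\<forall>\<^sub>F a in at_right 0. \<forall>t::real. \<bar>t\<bar> \<le> 1/2 \<and> \<bar>t\<bar> > C6 * sqrt a \<longrightarrow>
           norm (hh rs a (cis (2 * pi * t))) \<le> 1 - c5 * \<bar>t\<bar> / (ln (1 / a))^2"
  shows "\<exists>C>0. \<forall>\<^sub>F n in sequentially. \<forall>(\<zeta>::complex) (\<delta>::real).
           norm \<zeta> = 1 \<longrightarrow> 0 \<le> \<delta> \<longrightarrow> \<delta> < 1 \<longrightarrow>
           (\<Prod>j\<in>{JJ1 c4 c5 n..<JJ2 c4 c5 n}.
              norm (hh rs (aa n) (cis (2 * pi * (of_int j + \<delta>) / of_int (mm c4 n))) - \<zeta>))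
           \<le> exp (C * real n powr (1/5) * (ln (real n))^5)"
proof -
  note c = assms(1,2,3)
  define C where "C = 4 * exp (40 / c4) / (c4 * c5) + 1"
  have C0: "C > 0" unfolding C_def using c by (simp add: add_pos_nonneg)
  have e4: "eventually (\<lambda>n. rstar_ok (aa n) (rs (aa n))) sequentially"
    using ev_compose[OF assms(4)] by simp
  have e6: "eventually (\<lambda>n. \<forall>t::real. \<bar>t\<bar> \<le> 1/2 \<and> \<bar>t\<bar> > C6 * sqrt (aa n) \<longrightarrow>
           norm (hh rs (aa n) (cis (2 * pi * t))) \<le> 1 - c5 * \<bar>t\<bar> / (ln (1 / aa n))^2) sequentially"
    using ev_compose[OF assms(6)] by simp
  define Q where "Q = (\<lambda>r::nat. 9 * real r / ((real r / (ln (real r + 3)^2 + 1)) * ln (real r / (ln (real r + 3)^2 + 1) + 4)^2) \<le> 10)"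
  obtain R0 where R0: "\<And>r. r \<ge> R0 \<Longrightarrow> Q r"
    using r_asym unfolding Q_def eventually_sequentially by blast
  have rr_eq: "rr (aa n) = nat \<lfloor>real n powr (1/5)\<rfloor>" for n
    by (simp add: rr_def aa_def powr_powr)
  have eN: "eventually (\<lambda>n. real n powr (1/5) \<ge> real R0 + 41) sequentially"
    using A11[OF c] unfolding filterlim_at_top by blast
  have er: "eventually (\<lambda>n. Q (rr (aa n)) \<and> real (rr (aa n)) \<ge> 40) sequentially"
  proof (rule eventually_mono[OF eN])
    fix n assume h: "real n powr (1/5) \<ge> real R0 + 41"
    have "real (rr (aa n)) \<ge> real n powr (1/5) - 1" unfolding rr_eq by linarith
    hence "real (rr (aa n)) \<ge> real R0 + 40" using h by linarith
    hence "rr (aa n) \<ge> R0" "real (rr (aa n)) \<ge> 40" by linarith+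
    thus "Q (rr (aa n)) \<and> real (rr (aa n)) \<ge> 40" using R0 by blast
  qed
  have ev: "eventually (\<lambda>n. n \<ge> 1 \<and>
      (\<forall>t::real. \<bar>t\<bar> \<le> 1/2 \<and> \<bar>t\<bar> > C6 * sqrt (aa n) \<longrightarrow>
           norm (hh rs (aa n) (cis (2 * pi * t))) \<le> 1 - c5 * \<bar>t\<bar> / (ln (1 / aa n))^2) \<and>
      rstar_ok (aa n) (rs (aa n)) \<and>
      (Q (rr (aa n)) \<and> real (rr (aa n)) \<ge> 40) \<and>
      real n powr (2/5) / c4 - 1 \<ge> 1 \<and>
      real n powr (-1/5) * (real n powr (2/5) / c4 - 1) * ln (real n)^4 / c5 - 1 \<ge> 1 \<and>
      2 * real n powr (-1/5) * ln (real n)^4 / c5 \<le> 1 \<and>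
      real n powr (-1/5) * ln (real n)^4 / c5 - 1 / (real n powr (2/5) / c4 - 1) > C6 * real n powr (-1/5) \<and>
      c5 * (real n powr (-1/5) * ln (real n)^4 / c5) / (2/5 * ln (real n))^2 \<le> 1 \<and>
      real n powr (1/5) / (2*c4) * real n powr (1/5) < real n powr (2/5) / c4 - 1 \<and>
      (real n powr (-1/5) * ln (real n)^4 - c5 / (real n powr (2/5) / c4 - 1)) / (2/5 * ln (real n))^2 > 0 \<and>
      (real n powr (2/5) / c4) * exp (- ((real n powr (-1/5) * ln (real n)^4 - c5 / (real n powr (2/5) / c4 - 1)) / (2/5 * ln (real n))^2) * (real n powr (1/5) / (2*c4) - 1))
        / ((real n powr (-1/5) * ln (real n)^4 - c5 / (real n powr (2/5) / c4 - 1)) / (2/5 * ln (real n))^2) \<le> real n powr (1/5) * ln (real n) ^ 5 \<and>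
      1 + ln (real n) \<le> 2 * ln (real n) \<and>
      real n powr (1/5) \<ge> 2 \<and>
      ln (real n) \<ge> 1 \<and>
      real n powr (1/5) / (2*c4) \<le> real n) sequentially"
    by (intro eventually_conj eventually_ge_at_top e6 e4 er A1[OF c] A2[OF c] A3[OF c] A4[OF c] A5[OF c]
          A6[OF c] A7[OF c] A8[OF c] A9[OF c] A10[OF c] A10b[OF c] A12[OF assms(1)])
  show ?thesis
  proof (rule exI[of _ C], intro conjI C0)
    show "\<forall>\<^sub>F n in sequentially. \<forall>(\<zeta>::complex) (\<delta>::real).
           norm \<zeta> = 1 \<longrightarrow> 0 \<le> \<delta> \<longrightarrow> \<delta> < 1 \<longrightarrow>
           (\<Prod>j\<in>{JJ1 c4 c5 n..<JJ2 c4 c5 n}.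
              norm (hh rs (aa n) (cis (2 * pi * (of_int j + \<delta>) / of_int (mm c4 n))) - \<zeta>))
           \<le> exp (C * real n powr (1/5) * (ln (real n))^5)"
    proof (rule eventually_mono[OF ev], intro allI impI)
      fix n :: nat and zeta :: complex and delta :: real
      assume H: "n \<ge> 1 \<and>
      (\<forall>t::real. \<bar>t\<bar> \<le> 1/2 \<and> \<bar>t\<bar> > C6 * sqrt (aa n) \<longrightarrow>
           norm (hh rs (aa n) (cis (2 * pi * t))) \<le> 1 - c5 * \<bar>t\<bar> / (ln (1 / aa n))^2) \<and>
      rstar_ok (aa n) (rs (aa n)) \<and>
      (Q (rr (aa n)) \<and> real (rr (aa n)) \<ge> 40) \<and>
      real n powr (2/5) / c4 - 1 \<ge> 1 \<and>
      real n powr (-1/5) * (real n powr (2/5) / c4 - 1) * ln (real n)^4 / c5 - 1 \<ge> 1 \<and>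
      2 * real n powr (-1/5) * ln (real n)^4 / c5 \<le> 1 \<and>
      real n powr (-1/5) * ln (real n)^4 / c5 - 1 / (real n powr (2/5) / c4 - 1) > C6 * real n powr (-1/5) \<and>
      c5 * (real n powr (-1/5) * ln (real n)^4 / c5) / (2/5 * ln (real n))^2 \<le> 1 \<and>
      real n powr (1/5) / (2*c4) * real n powr (1/5) < real n powr (2/5) / c4 - 1 \<and>
      (real n powr (-1/5) * ln (real n)^4 - c5 / (real n powr (2/5) / c4 - 1)) / (2/5 * ln (real n))^2 > 0 \<and>
      (real n powr (2/5) / c4) * exp (- ((real n powr (-1/5) * ln (real n)^4 - c5 / (real n powr (2/5) / c4 - 1)) / (2/5 * ln (real n))^2) * (real n powr (1/5) / (2*c4) - 1))
        / ((real n powr (-1/5) * ln (real n)^4 - c5 / (real n powr (2/5) / c4 - 1)) / (2/5 * ln (real n))^2) \<le> real n powr (1/5) * ln (real n) ^ 5 \<and>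
      1 + ln (real n) \<le> 2 * ln (real n) \<and>
      real n powr (1/5) \<ge> 2 \<and>
      ln (real n) \<ge> 1 \<and>
      real n powr (1/5) / (2*c4) \<le> real n"
        and z: "norm zeta = 1" and d0: "0 \<le> delta" and d1: "delta < 1"
      from H have Qr: "Q (rr (aa n))" by blast
      have rA: "9 * real (rr (aa n)) / ((real (rr (aa n)) / (ln (real (rr (aa n)) + 3)^2 + 1)) * ln (real (rr (aa n)) / (ln (real (rr (aa n)) + 3)^2 + 1) + 4)^2) \<le> 10"
        using Qr unfolding Q_def .
      show "(\<Prod>j\<in>{JJ1 c4 c5 n..<JJ2 c4 c5 n}.
              norm (hh rs (aa n) (cis (2 * pi * (of_int j + delta) / of_int (mm c4 n))) - zeta))
           \<le> exp (C * real n powr (1/5) * (ln (real n))^5)"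
        unfolding C_def
        by (rule final_n[OF c(1,2) _ _ _ rA _ _ _ _ _ _ _ _ _ _ _ _ _ z d0 d1]) (use H in blast)+
    qed
  qed
qed

end
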